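(* For arbitrary nonnegative rates $p_1,\dots,p_n,q_1,\dots,q_n$, the Markov chain on $\Omega_{L,n}$ lumps to the one-dimensional ASEP on $\Psi_{L,n}$ via the map $\Pi$: for every $\omega\in\Omega_{L,n}$ and every $\psi\in\Psi_{L,n}$ with $\psi\neq\Pi(\omega)$, the sum of the transition rates from $\omega$ to configurations in $\Pi^{-1}(\psi)$ equals the ASEP transition rate from $\Pi(\omega)$ to $\psi$. In particular the image under $\Pi$ of the chain on $\Omega_{L,n}$ is the ASEP on $\Psi_{L,n}$.
   Context: Fix $1\le n\le L$. Particle labels $k$ are taken modulo $n$, positions modulo $L$. $\Omega_{L,n}$ is the set of words $w_1\cdots w_L$ on the ring $\mathbb{Z}/L\mathbb{Z}$ over the alphabet $\{\bullet_1,\dots,\bullet_n,\Box_1,\dots,\Box_n\}$ in which each $\bullet_k$ occurs exactly once, the letters $\bullet_1,\dots,\bullet_n$ appear in this cyclic order, and the remaining $L-n$ letters are arbitrary $\Box_i$'s. The chain on $\Omega_{L,n}$ has transitions (displayed segments are consecutive positions, rest unchanged, $C$ a possibly empty word in the $\Box$-letters): (T1) $\bullet_k\Box_i \to \Box_i\bullet_k$ at rate $p_k$, if $i\neq k$; (T2) $\bullet_{k-1}\,C\,\bullet_k\Box_k \to \bullet_{k-1}\Box_{k-1}\,C\,\bullet_k$ at rate $p_k$; (T3) $\Box_i\bullet_k \to \bullet_k\Box_i$ at rate $q_k$, if $i\neq k$; (T4) $\Box_k\bullet_k\,C\,\bullet_{k+1} \to \bullet_k\,C\,\Box_{k+1}\bullet_{k+1}$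 at rate $q_k$. $\Psi_{L,n}$ is the set of words on the ring $\mathbb{Z}/L\mathbb{Z}$ containing each of $\bullet_1,\dots,\bullet_n$ exactly once in this cyclic order and $L-n$ vacancies $\Box$. The ASEP on $\Psi_{L,n}$ has only the transitions $\bullet_k\Box\to\Box\bullet_k$ at rate $p_k$ and $\Box\bullet_k\to\bullet_k\Box$ at rate $q_k$ (on consecutive positions). The map $\Pi:\Omega_{L,n}\to\Psi_{L,n}$ replaces every letter $\Box_i$ by $\Box$. *)

theory Defs
  imports Main "HOL.Real"
begin

(* Conventions: particle / hole labels are 0..n-1 (paper: 1..n), taken mod n;
   positions are 0..L-1 (ring Z/LZ), a configuration is a list of length L.
   Rates p k, q k refer to the paper's p_{k+1}, q_{k+1}. *)

datatype letter = Pt nat | Hl nat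

datatype aletter = APt nat | Vac

definition is_pt :: "letter \<Rightarrow> bool" where
  "is_pt x = (case x of Pt _ \<Rightarrow> True | Hl _ \<Rightarrow> False)"

definition is_apt :: "aletter \<Rightarrow> bool" where
  "is_apt x = (case x of APt _ \<Rightarrow> True | Vac \<Rightarrow> False)"

definition in_Omega :: "nat \<Rightarrow> nat \<Rightarrow> letter list \<Rightarrow> bool" where
  "in_Omega L n w \<longleftrightarrow>
     length w = L \<and>
     (\<forall>x\<in>set w. case x of Pt k \<Rightarrow> k < n | Hl i \<Rightarrow> i < n) \<and>
     (\<forall>k<n. card {i. i < L \<and> w ! i = Pt k} = 1) \<and>
     \<comment> \<open>cyclic order: the next particle clockwise after bullet_k is bullet_{k+1}\<close>
     (\<forall>i<L. \<forall>k d. w ! i = Pt k \<and> 0 < d \<and> d \<le> L \<and> is_pt (w ! ((i + d) mod L))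
        \<and> (\<forall>e. 0 < e \<and> e < d \<longrightarrow> \<not> is_pt (w ! ((i + e) mod L)))
        \<longrightarrow> w ! ((i + d) mod L) = Pt ((k + 1) mod n))"

definition in_Psi :: "nat \<Rightarrow> nat \<Rightarrow> aletter list \<Rightarrow> bool" where
  "in_Psi L n v \<longleftrightarrow>
     length v = L \<and>
     (\<forall>x\<in>set v. case x of APt k \<Rightarrow> k < n | Vac \<Rightarrow> True) \<and>
     (\<forall>k<n. card {i. i < L \<and> v ! i = APt k} = 1) \<and>
     (\<forall>i<L. \<forall>k d. v ! i = APt k \<and> 0 < d \<and> d \<le> L \<and> is_apt (v ! ((i + d) mod L))
        \<and> (\<forall>e. 0 < e \<and> e < d \<longrightarrow> \<not> is_apt (v ! ((i + e) mod L)))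
        \<longrightarrow> v ! ((i + d) mod L) = APt ((k + 1) mod n))"

fun proj_letter :: "letter \<Rightarrow> aletter" where
  "proj_letter (Pt k) = APt k"
| "proj_letter (Hl i) = Vac"

definition Pi :: "letter list \<Rightarrow> aletter list" where
  "Pi w = map proj_letter w"

definition swp :: "'a list \<Rightarrow> nat \<Rightarrow> nat \<Rightarrow> 'a list" where
  "swp w a b = w[a := w ! b, b := w ! a]"

definition back_dist :: "nat \<Rightarrow> letter list \<Rightarrow> nat \<Rightarrow> nat" where
  "back_dist L w j = (LEAST d. 0 < d \<and> is_pt (w ! ((j + L - d) mod L)))"

definition fwd_dist :: "nat \<Rightarrow> letter list \<Rightarrow> nat \<Rightarrow> nat" where
  "fwd_dist L w j = (LEAST d. 0 < d \<and> is_pt (w ! ((j + d) mod L)))"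

(* bullet_{k-1} C bullet_k Box_k  -->  bullet_{k-1} Box_{k-1} C bullet_k *)
definition t2 :: "nat \<Rightarrow> nat \<Rightarrow> letter list \<Rightarrow> nat \<Rightarrow> nat \<Rightarrow> letter list" where
  "t2 L n w j k =
     (let d = back_dist L w j; a = (j + L - d) mod L in
      map (\<lambda>x. if x = (j + 1) mod L then Pt k
                else let off = (x + L - a - 1) mod L + 1 in
                  if off = 1 then Hl ((k + n - 1) mod n)
                  else if off \<le> d then w ! ((x + L - 1) mod L)
                  else w ! x) [0..<L])"

(* Box_k bullet_k C bullet_{k+1}  -->  bullet_k C Box_{k+1} bullet_{k+1} *)
definition t4 :: "nat \<Rightarrow> nat \<Rightarrow> letter list \<Rightarrow> nat \<Rightarrow> nat \<Rightarrow> letter list" where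
  "t4 L n w j k =
     (let d = fwd_dist L w j; b = (j + d) mod L in
      map (\<lambda>x. if x = (j + L - 1) mod L then Pt k
                else let off = (b + L - x - 1) mod L + 1 in
                  if off = 1 then Hl ((k + 1) mod n)
                  else if off \<le> d then w ! ((x + 1) mod L)
                  else w ! x) [0..<L])"

(* all transitions (T1)-(T4) out of w, as a list of (rate, target), one entry per
   transition instance, indexed by the position j of the moving particle bullet_k *)
definition moves_at :: "nat \<Rightarrow> nat \<Rightarrow> (nat \<Rightarrow> real) \<Rightarrow> (nat \<Rightarrow> real) \<Rightarrow> letter list
    \<Rightarrow> nat \<Rightarrow> (real \<times> letter list) list" where
  "moves_at L n p q w j =
     (case w ! j of Hl _ \<Rightarrow> []
      | Pt k \<Rightarrow>
        (let r = (j + 1) mod L; l = (j + L - 1) mod L in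
         (case w ! r of Pt _ \<Rightarrow> []
          | Hl i \<Rightarrow>
             (if i \<noteq> k then [(p k, swp w j r)]                                   \<comment> \<open>T1\<close>
              else if w ! ((j + L - back_dist L w j) mod L) = Pt ((k + n - 1) mod n)
                   then [(p k, t2 L n w j k)] else []))                           \<comment> \<open>T2\<close>
         @
         (case w ! l of Pt _ \<Rightarrow> []
          | Hl i \<Rightarrow>
             (if i \<noteq> k then [(q k, swp w l j)]                                   \<comment> \<open>T3\<close>
              else if w ! ((j + fwd_dist L w j) mod L) = Pt ((k + 1) mod n)
                   then [(q k, t4 L n w j k)] else []))))"

definition moves :: "nat \<Rightarrow> nat \<Rightarrow> (nat \<Rightarrow> real) \<Rightarrow> (nat \<Rightarrow> real) \<Rightarrow> letter list
    \<Rightarrow> (real \<times> letter list) list" where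
  "moves L n p q w = concat (map (moves_at L n p q w) [0..<L])"

definition rate_to_fibre :: "nat \<Rightarrow> nat \<Rightarrow> (nat \<Rightarrow> real) \<Rightarrow> (nat \<Rightarrow> real) \<Rightarrow> letter list
    \<Rightarrow> aletter list \<Rightarrow> real" where
  "rate_to_fibre L n p q w \<psi> = sum_list [fst m. m \<leftarrow> moves L n p q w, Pi (snd m) = \<psi>]"

definition asep_moves_at :: "nat \<Rightarrow> (nat \<Rightarrow> real) \<Rightarrow> (nat \<Rightarrow> real) \<Rightarrow> aletter list
    \<Rightarrow> nat \<Rightarrow> (real \<times> aletter list) list" where
  "asep_moves_at L p q v j =
     (case v ! j of Vac \<Rightarrow> []
      | APt k \<Rightarrow>
        (let r = (j + 1) mod L; l = (j + L - 1) mod L in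
         (if v ! r = Vac then [(p k, swp v j r)] else [])
         @ (if v ! l = Vac then [(q k, swp v l j)] else [])))"

definition asep_rate :: "nat \<Rightarrow> (nat \<Rightarrow> real) \<Rightarrow> (nat \<Rightarrow> real) \<Rightarrow> aletter list
    \<Rightarrow> aletter list \<Rightarrow> real" where
  "asep_rate L p q v \<psi> =
     sum_list [fst m. m \<leftarrow> concat (map (asep_moves_at L p q v) [0..<L]), snd m = \<psi>]"

end

theory Submission imports Defs begin
lemma modA: "L \<le> y \<Longrightarrow> y < 2*L \<Longrightarrow> y mod (L::nat) = y - L"
  by (metis add_diff_inverse_nat le_mod_geq less_diff_conv2 mod_less mult_2 not_less)
lemma arB1: "\<lbrakk>(j::nat) < L; 0 < d; d \<le> L; e < L; x = (if e \<le> j then j - e else j + L - e);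
  a = (if d \<le> j then j - d else j + L - d); t = x + L - a - 1; t < L \<rbrakk> \<Longrightarrow>
  t + 1 = (if e < d then d - e else L + d - e)"
  by (cases "e \<le> j"; cases "d \<le> j"; cases "e < d"; simp; linarith)
lemma arB2: "\<lbrakk>(j::nat) < L; 0 < d; d \<le> L; e < L; x = (if e \<le> j then j - e else j + L - e);
  a = (if d \<le> j then j - d else j + L - d); t = x + L - a - 1; \<not> t < L \<rbrakk> \<Longrightarrow>
  t - L + 1 = (if e < d then d - e else L + d - e)"
  by (cases "e \<le> j"; cases "d \<le> j"; cases "e < d"; simp; linarith)
lemma arF1: "\<lbrakk>(j::nat) < L; 0 < d; d \<le> L; e < L; x = (if j + e < L then j + e else j + e - L);
  b = (if j + d < L then j + d else j + d - L); t = b + L - x - 1; t < L \<rbrakk> \<Longrightarrow>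
  t + 1 = (if e < d then d - e else L + d - e)"
  by (cases "j + e < L"; cases "j + d < L"; cases "e < d"; simp; linarith)
lemma arF2: "\<lbrakk>(j::nat) < L; 0 < d; d \<le> L; e < L; x = (if j + e < L then j + e else j + e - L);
  b = (if j + d < L then j + d else j + d - L); t = b + L - x - 1; \<not> t < L \<rbrakk> \<Longrightarrow>
  t - L + 1 = (if e < d then d - e else L + d - e)"
  by (cases "j + e < L"; cases "j + d < L"; cases "e < d"; simp; linarith)

lemma off_back:
  fixes L j d e x :: nat
  assumes "j < L" "0 < d" "d \<le> L" "e < L" "x = (j + L - e) mod L"
  shows "(x + L - (j + L - d) mod L - 1) mod L + 1 = (if e < d then d - e else L + d - e)"
proof -
  have x: "x = (if e \<le> j then j - e else j + L - e)" 
    using assms modA[of L "j+L-e"] by (cases "e \<le> j") auto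
  define a where "a = (j + L - d) mod L"
  have a: "a = (if d \<le> j then j - d else j + L - d)"
    using assms modA[of L "j+L-d"] a_def by (cases "d \<le> j") auto
  have xl: "x < L" "a < L" using x a assms by auto
  define t where "t = x + L - a - 1"
  have "t mod L + 1 = (if e < d then d - e else L + d - e)"
  proof (cases "t < L")
    case True
    then show ?thesis using arB1[OF assms(1-4) x a t_def True] by simp
  next
    case False
    then have "t mod L = t - L" using modA[of L t] xl t_def by auto
    then show ?thesis using arB2[OF assms(1-4) x a t_def False] by simp
  qed
  then show ?thesis unfolding a_def[symmetric] t_def .
qed
lemma off_fwd:
  fixes L j d e x :: nat
  assumes "j < L" "0 < d" "d \<le> L" "e < L" "x = (j + e) mod L"
  shows "((j + d) mod L + L - x - 1) mod L + 1 = (if e < d then d - e else L + d - e)"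
proof -
  have x: "x = (if j + e < L then j + e else j + e - L)" 
    using assms modA[of L "j+e"] by (cases "j + e < L") auto
  define b where "b = (j + d) mod L"
  have b: "b = (if j + d < L then j + d else j + d - L)"
    using assms modA[of L "j+d"] b_def by (cases "j + d < L") auto
  have xl: "x < L" "b < L" using x b assms by auto
  define t where "t = b + L - x - 1"
  have "t mod L + 1 = (if e < d then d - e else L + d - e)"
  proof (cases "t < L")
    case True
    then show ?thesis using arF1[OF assms(1-4) x b t_def True] by simp
  next
    case False
    then have "t mod L = t - L" using modA[of L t] xl t_def by auto
    then show ?thesis using arF2[OF assms(1-4) x b t_def False] by simp
  qed
  then show ?thesis unfolding b_def[symmetric] t_def .
qed
lemma xe_back: "x < L \<Longrightarrow> (j::nat) < L \<Longrightarrow> (j+L-x) mod L < L \<and> x = (j+L-(j+L-x) mod L) mod L"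
proof -
  assume a: "x < L" "j < L"
  show ?thesis
  proof (cases "x \<le> j")
    case True
    then have "(j+L-x) mod L = j-x" using a modA[of L "j+L-x"] by simp
    then show ?thesis using a True by simp
  next
    case False
    then have "(j+L-x) mod L = j+L-x" using a by simp
    then show ?thesis using a False modA[of L "x+L"] by simp
  qed
qed
lemma prev_back: "j < L \<Longrightarrow> e + 1 < L \<Longrightarrow> x = (j+L-e) mod L \<Longrightarrow> (x+L-1) mod (L::nat) = (j+L-(e+1)) mod L"
proof -
  assume a: "j < L" "e + 1 < L" "x = (j+L-e) mod L"
  show ?thesis
  proof (cases "e \<le> j")
    case True
    then have x: "x = j - e" using a modA[of L "j+L-e"] by simp
    show ?thesis
    proof (cases "e < j")
      case True
      then show ?thesis using a x modA[of L "j-e+L-1"] modA[of L "j+L-(e+1)"] by simp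
    next
      case False
      then show ?thesis using a x True by simp
    qed
  next
    case False
    then show ?thesis using a modA[of L "j + L + L - Suc e"] by simp
  qed
qed
lemma xe_fwd: "x < L \<Longrightarrow> (j::nat) < L \<Longrightarrow> (x+L-j) mod L < L \<and> x = (j+(x+L-j) mod L) mod L"
proof -
  assume a: "x < L" "j < L"
  show ?thesis
  proof (cases "j \<le> x")
    case True
    then show ?thesis using a modA[of L "x+L-j"] by simp
  next
    case False
    then show ?thesis using a by simp
  qed
qed
lemma next_fwd: "j < L \<Longrightarrow> e + 1 < L \<Longrightarrow> x = (j+e) mod L \<Longrightarrow> (x+1) mod (L::nat) = (j+(e+1)) mod L"
  by (simp add: mod_Suc_eq)
lemma back_dist_props:
  assumes "j < L" "is_pt (w!j)"
  shows "0 < back_dist L w j" "back_dist L w j \<le> L" "is_pt (w!((j+L-back_dist L w j) mod L))"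
    "\<And>e. 0 < e \<Longrightarrow> e < back_dist L w j \<Longrightarrow> \<not> is_pt (w!((j+L-e) mod L))"
proof -
  have P: "0 < L \<and> is_pt (w!((j+L-L) mod L))" using assms by simp
  show "0 < back_dist L w j" "is_pt (w!((j+L-back_dist L w j) mod L))"
    unfolding back_dist_def using LeastI[of "\<lambda>d. 0 < d \<and> is_pt (w!((j+L-d) mod L))", OF P] by auto
  show "back_dist L w j \<le> L" unfolding back_dist_def by (rule Least_le) (rule P)
  fix e assume "0 < e" "e < back_dist L w j"
  then show "\<not> is_pt (w!((j+L-e) mod L))" unfolding back_dist_def using not_less_Least by blast
qed
lemma fwd_dist_props:
  assumes "j < L" "is_pt (w!j)"
  shows "0 < fwd_dist L w j" "fwd_dist L w j \<le> L" "is_pt (w!((j+fwd_dist L w j) mod L))"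
    "\<And>e. 0 < e \<Longrightarrow> e < fwd_dist L w j \<Longrightarrow> \<not> is_pt (w!((j+e) mod L))"
proof -
  have P: "0 < L \<and> is_pt (w!((j+L) mod L))" using assms by simp
  show "0 < fwd_dist L w j" "is_pt (w!((j+fwd_dist L w j) mod L))"
    unfolding fwd_dist_def using LeastI[of "\<lambda>d. 0 < d \<and> is_pt (w!((j+d) mod L))", OF P] by auto
  show "fwd_dist L w j \<le> L" unfolding fwd_dist_def by (rule Least_le) (rule P)
  fix e assume "0 < e" "e < fwd_dist L w j"
  then show "\<not> is_pt (w!((j+e) mod L))" unfolding fwd_dist_def using not_less_Least by blast
qed
lemma hole_vac: "\<not> is_pt y \<Longrightarrow> proj_letter y = Vac"
  by (cases y) (auto simp: is_pt_def)

lemma t2_proj: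
  assumes len: "length w = L" and j: "j < L" and wj: "w!j = Pt k" and wr: "w!((j+1) mod L) = Hl i"
  shows "Pi (t2 L n w j k) = swp (Pi w) j ((j+1) mod L)"
proof -
  define r where "r = (j+1) mod L"
  have L0: "0 < L" using j by simp
  have rj: "r \<noteq> j" using wj wr r_def by auto
  have rL: "r < L" using L0 r_def by simp
  have wr': "w!r = Hl i" using wr r_def by simp
  have ptj: "is_pt (w!j)" using wj by (simp add: is_pt_def)
  define d where "d = back_dist L w j"
  have d0: "0<d" and dL: "d \<le> L" and hole: "\<And>e. 0<e \<Longrightarrow> e<d \<Longrightarrow> \<not> is_pt (w!((j+L-e) mod L))"
    using back_dist_props[OF j ptj] d_def by auto
  define a where "a = (j+L-d) mod L"
  show ?thesis unfolding r_def[symmetric]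
  proof (rule nth_equalityI)
    show "length (Pi (t2 L n w j k)) = length (swp (Pi w) j r)" by (simp add: Pi_def t2_def swp_def len Let_def)
    fix x assume "x < length (Pi (t2 L n w j k))"
    hence x: "x < L" by (simp add: Pi_def t2_def Let_def)
    have lhs: "Pi (t2 L n w j k) ! x = proj_letter (if x = r then Pt k
       else if (x+L-a-1) mod L + 1 = 1 then Hl ((k+n-1) mod n)
       else if (x+L-a-1) mod L + 1 \<le> d then w!((x+L-1) mod L) else w!x)"
      using x by (simp add: Pi_def t2_def Let_def a_def d_def r_def)
    have rhs: "swp (Pi w) j r ! x = (if x = r then APt k else if x = j then proj_letter (w!r) else proj_letter (w!x))"
      using x j rL rj wj len by (simp add: swp_def Pi_def nth_list_update)
    define e where "e = (j+L-x) mod L"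
    have eL: "e<L" and xe: "x = (j+L-e) mod L" using xe_back[OF x j] e_def by auto
    have off: "(x+L-a-1) mod L + 1 = (if e<d then d-e else L+d-e)"
      using off_back[OF j d0 dL eL xe] a_def by simp
    show "Pi (t2 L n w j k) ! x = swp (Pi w) j r ! x"
    proof (cases "x = r")
      case True
      then show ?thesis using lhs rhs by simp
    next
      case xr: False
      show ?thesis
      proof (cases "x = j")
        case True
        then have e0: "e = 0" using e_def by simp
        have "proj_letter (w!((x+L-1) mod L)) = Vac" if "1 < d"
          using hole[of 1] that True by (intro hole_vac) simp
        then show ?thesis using lhs rhs xr True off e0 wr' d0 by auto
      next
        case xj: False
        have e0: "e \<noteq> 0" using xe xj j by (cases "e = 0") auto
        show ?thesis
        proof (cases "e < d")
          case True
          have h1: "proj_letter (w!x) = Vac" using hole[of e] e0 True xe by (intro hole_vac) simp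
          have "proj_letter (w!((x+L-1) mod L)) = Vac" if "e + 1 < d"
            using hole[of "e+1"] that prev_back[OF j _ xe] dL by (intro hole_vac) simp
          then show ?thesis using lhs rhs xr xj off True h1 by auto
        next
          case False
          then show ?thesis using lhs rhs xr xj off eL d0 by auto
        qed
      qed
    qed
  qed
qed

lemma t4_proj:
  assumes len: "length w = L" and j: "j < L" and wj: "w!j = Pt k" and wl: "w!((j+L-1) mod L) = Hl i"
  shows "Pi (t4 L n w j k) = swp (Pi w) ((j+L-1) mod L) j"
proof -
  define l where "l = (j+L-1) mod L"
  have L0: "0 < L" using j by simp
  have lj: "l \<noteq> j" using wj wl l_def by auto
  have lL: "l < L" using L0 l_def by simp
  have wl': "w!l = Hl i" using wl l_def by simp
  have ptj: "is_pt (w!j)" using wj by (simp add: is_pt_def)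
  define d where "d = fwd_dist L w j"
  have d0: "0<d" and dL: "d \<le> L" and hole: "\<And>e. 0<e \<Longrightarrow> e<d \<Longrightarrow> \<not> is_pt (w!((j+e) mod L))"
    using fwd_dist_props[OF j ptj] d_def by auto
  define b where "b = (j+d) mod L"
  show ?thesis unfolding l_def[symmetric]
  proof (rule nth_equalityI)
    show "length (Pi (t4 L n w j k)) = length (swp (Pi w) l j)" by (simp add: Pi_def t4_def swp_def len Let_def)
    fix x assume "x < length (Pi (t4 L n w j k))"
    hence x: "x < L" by (simp add: Pi_def t4_def Let_def)
    have lhs: "Pi (t4 L n w j k) ! x = proj_letter (if x = l then Pt k
       else if (b+L-x-1) mod L + 1 = 1 then Hl ((k+1) mod n)
       else if (b+L-x-1) mod L + 1 \<le> d then w!((x+1) mod L) else w!x)"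
      using x by (simp add: Pi_def t4_def Let_def b_def d_def l_def)
    have rhs: "swp (Pi w) l j ! x = (if x = j then proj_letter (w!l) else if x = l then APt k else proj_letter (w!x))"
      using x j lL lj wj len by (simp add: swp_def Pi_def nth_list_update)
    define e where "e = (x+L-j) mod L"
    have eL: "e<L" and xe: "x = (j+e) mod L" using xe_fwd[OF x j] e_def by auto
    have off: "(b+L-x-1) mod L + 1 = (if e<d then d-e else L+d-e)"
      using off_fwd[OF j d0 dL eL xe] b_def by simp
    show "Pi (t4 L n w j k) ! x = swp (Pi w) l j ! x"
    proof (cases "x = l")
      case True
      then show ?thesis using lhs rhs lj by simp
    next
      case xr: False
      show ?thesis
      proof (cases "x = j")
        case True
        then have e0: "e = 0" using e_def by simp
        have "proj_letter (w!((x+1) mod L)) = Vac" if "1 < d"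
          using hole[of 1] that True by (intro hole_vac) simp
        then show ?thesis using lhs rhs xr True off e0 wl' d0 by auto
      next
        case xj: False
        have e0: "e \<noteq> 0" using xe xj j by (cases "e = 0") auto
        show ?thesis
        proof (cases "e < d")
          case True
          have h1: "proj_letter (w!x) = Vac" using hole[of e] e0 True xe by (intro hole_vac) simp
          have "proj_letter (w!((x+1) mod L)) = Vac" if "e + 1 < d"
            using hole[of "e+1"] that next_fwd[OF j _ xe] dL by (intro hole_vac) simp
          then show ?thesis using lhs rhs xr xj off True h1 by auto
        next
          case False
          then show ?thesis using lhs rhs xr xj off eL d0 by auto
        qed
      qed
    qed
  qed
qed
lemma Pi_nth: "i < length w \<Longrightarrow> Pi w ! i = proj_letter (w ! i)"
  by (simp add: Pi_def)
lemma Pi_swp: "a < length w \<Longrightarrow> b < length w \<Longrightarrow> Pi (swp w a b) = swp (Pi w) a b"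
  by (simp add: Pi_def swp_def map_update)

lemma cyc_prev:
  assumes om: "in_Omega L n w" and j: "j < L" and wj: "w!j = Pt k"
  shows "w!((j+L-back_dist L w j) mod L) = Pt ((k+n-1) mod n)"
proof -
  have ptj: "is_pt (w!j)" using wj by (simp add: is_pt_def)
  define d where "d = back_dist L w j"
  have d0: "0<d" and dL: "d \<le> L" and pa: "is_pt (w!((j+L-d) mod L))"
    and hole: "\<And>e. 0<e \<Longrightarrow> e<d \<Longrightarrow> \<not> is_pt (w!((j+L-e) mod L))"
    using back_dist_props[OF j ptj] d_def by auto
  define a where "a = (j+L-d) mod L"
  have aL: "a < L" using j a_def by simp
  have len: "length w = L" using om by (simp add: in_Omega_def)
  obtain k' where wa: "w!a = Pt k'" using pa a_def by (cases "w!a") (auto simp: is_pt_def)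
  have "w!a \<in> set w" using aL len by simp
  then have k'n: "k' < n" using om wa by (fastforce simp: in_Omega_def)
  have ad: "(a + d) mod L = j" using j dL unfolding a_def by (simp add: mod_add_left_eq)
  have ae: "\<not> is_pt (w!((a+e) mod L))" if "0 < e" "e < d" for e
  proof -
    have "(a + e) mod L = (j + L - (d - e)) mod L" using that dL unfolding a_def
      by (simp add: mod_add_left_eq)
    then show ?thesis using hole[of "d-e"] that by simp
  qed
  have "w ! ((a + d) mod L) = Pt ((k' + 1) mod n)"
    using om aL wa d0 dL ad ptj ae unfolding in_Omega_def by blast
  then have "k = (k'+1) mod n" using ad wj by simp
  then have "(k+n-1) mod n = k'" using k'n
  proof (cases "k' + 1 < n")
    case False
    then have "k' + 1 = n" using k'n by simp
    moreover assume "k = (k'+1) mod n"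
    ultimately show ?thesis by simp
  qed auto
  then show ?thesis using wa a_def d_def by simp
qed

lemma cyc_next:
  assumes om: "in_Omega L n w" and j: "j < L" and wj: "w!j = Pt k"
  shows "w!((j+fwd_dist L w j) mod L) = Pt ((k+1) mod n)"
proof -
  have ptj: "is_pt (w!j)" using wj by (simp add: is_pt_def)
  define d where "d = fwd_dist L w j"
  have d0: "0<d" and dL: "d \<le> L" and pa: "is_pt (w!((j+d) mod L))"
    and hole: "\<And>e. 0<e \<Longrightarrow> e<d \<Longrightarrow> \<not> is_pt (w!((j+e) mod L))"
    using fwd_dist_props[OF j ptj] d_def by auto
  show ?thesis using om j wj d0 dL pa hole unfolding in_Omega_def d_def[symmetric] by blast
qed

lemma moves_at_proj:
  assumes om: "in_Omega L n w" and j: "j < L"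
  shows "map (\<lambda>m. (fst m, Pi (snd m))) (moves_at L n p q w j) = asep_moves_at L p q (Pi w) j"
proof -
  have len: "length w = L" using om by (simp add: in_Omega_def)
  define r where "r = (j+1) mod L"
  define l where "l = (j+L-1) mod L"
  have rL: "r < L" and lL: "l < L" using j r_def l_def by auto
  show ?thesis
  proof (cases "w!j")
    case (Hl i)
    then show ?thesis using j len by (simp add: moves_at_def asep_moves_at_def Pi_nth)
  next
    case (Pt k)
    have A: "map (\<lambda>m. (fst m, Pi (snd m)))
       (case w ! r of Pt _ \<Rightarrow> []
          | Hl i \<Rightarrow>
             (if i \<noteq> k then [(p k, swp w j r)]
              else if w ! ((j + L - back_dist L w j) mod L) = Pt ((k + n - 1) mod n)
                   then [(p k, t2 L n w j k)] else []))
      = (if Pi w ! r = Vac then [(p k, swp (Pi w) j r)] else [])"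
    proof (cases "w!r")
      case (Pt x1)
      then show ?thesis using rL len by (simp add: Pi_nth)
    next
      case (Hl i)
      then show ?thesis using rL len j cyc_prev[OF om j Pt] t2_proj[OF len j Pt, of i] r_def
        by (simp add: Pi_nth Pi_swp)
    qed
    have B: "map (\<lambda>m. (fst m, Pi (snd m)))
       (case w ! l of Pt _ \<Rightarrow> []
          | Hl i \<Rightarrow>
             (if i \<noteq> k then [(q k, swp w l j)]
              else if w ! ((j + fwd_dist L w j) mod L) = Pt ((k + 1) mod n)
                   then [(q k, t4 L n w j k)] else []))
      = (if Pi w ! l = Vac then [(q k, swp (Pi w) l j)] else [])"
    proof (cases "w!l")
      case (Pt x1)
      then show ?thesis using lL len by (simp add: Pi_nth)
    next
      case (Hl i)
      then show ?thesis using lL len j cyc_next[OF om j Pt] t4_proj[OF len j Pt, of i] l_def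
        by (simp add: Pi_nth Pi_swp)
    qed
    have "Pi w ! j = APt k" using Pt j len by (simp add: Pi_nth)
    then show ?thesis using A B Pt unfolding moves_at_def asep_moves_at_def Let_def
      r_def[symmetric] l_def[symmetric] by simp
  qed
qed
lemma comp_map: "[fst m. m \<leftarrow> xs, Pi (snd m) = \<psi>] = [fst m. m \<leftarrow> map (\<lambda>m. (fst m, Pi (snd m))) xs, snd m = \<psi>]"
  by (induction xs) auto

lemma proj_apt: "(proj_letter y = APt k) = (y = Pt k)" by (cases y) auto
lemma proj_isapt: "is_apt (proj_letter y) = is_pt y" by (cases y) (auto simp: is_apt_def is_pt_def)

lemma Pi_Psi:
  assumes om: "in_Omega L n w"
  shows "in_Psi L n (Pi w)"
proof -
  have len: "length w = L" using om by (simp add: in_Omega_def)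
  have nth: "\<And>i. i < L \<Longrightarrow> Pi w ! i = proj_letter (w!i)" using len by (simp add: Pi_nth)
  have c1: "length (Pi w) = L" using len by (simp add: Pi_def)
  have c2: "\<forall>x\<in>set (Pi w). case x of APt k \<Rightarrow> k < n | Vac \<Rightarrow> True"
  proof
    fix x assume "x \<in> set (Pi w)"
    then obtain y where y: "y \<in> set w" "x = proj_letter y" by (auto simp: Pi_def)
    have "case y of Pt k \<Rightarrow> k < n | Hl i \<Rightarrow> i < n" using om y(1) unfolding in_Omega_def by blast
    then show "case x of APt k \<Rightarrow> k < n | Vac \<Rightarrow> True" using y(2)
      by (cases y) auto
  qed
  have c3: "\<forall>k<n. card {i. i < L \<and> Pi w ! i = APt k} = 1"
  proof (intro allI impI)
    fix k assume "k < n"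
    have "{i. i < L \<and> Pi w ! i = APt k} = {i. i < L \<and> w ! i = Pt k}" using nth proj_apt by auto
    then show "card {i. i < L \<and> Pi w ! i = APt k} = 1" using om \<open>k < n\<close> by (simp add: in_Omega_def)
  qed
  have c4: "\<forall>i<L. \<forall>k d. Pi w ! i = APt k \<and> 0 < d \<and> d \<le> L \<and> is_apt (Pi w ! ((i + d) mod L))
        \<and> (\<forall>e. 0 < e \<and> e < d \<longrightarrow> \<not> is_apt (Pi w ! ((i + e) mod L)))
        \<longrightarrow> Pi w ! ((i + d) mod L) = APt ((k + 1) mod n)"
  proof (intro allI impI)
    fix i k d assume i: "i < L" and h: "Pi w ! i = APt k \<and> 0 < d \<and> d \<le> L \<and> is_apt (Pi w ! ((i + d) mod L))
        \<and> (\<forall>e. 0 < e \<and> e < d \<longrightarrow> \<not> is_apt (Pi w ! ((i + e) mod L)))"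
    have mL: "\<And>t. t mod L < L" using i by simp
    have h2: "w ! i = Pt k \<and> 0 < d \<and> d \<le> L \<and> is_pt (w ! ((i + d) mod L))
        \<and> (\<forall>e. 0 < e \<and> e < d \<longrightarrow> \<not> is_pt (w ! ((i + e) mod L)))"
      using h i nth[OF i] nth[OF mL] by (simp add: proj_apt proj_isapt)
    then have "w ! ((i + d) mod L) = Pt ((k + 1) mod n)" using om i unfolding in_Omega_def by blast
    then show "Pi w ! ((i + d) mod L) = APt ((k + 1) mod n)" using nth[OF mL] by simp
  qed
  show ?thesis unfolding in_Psi_def using c1 c2 c3 c4 by blast
qed

theorem proposition3p2:
  fixes L n :: nat and p q :: "nat \<Rightarrow> real"
  assumes "1 \<le> n" and "n \<le> L"
    and "\<And>k. k < n \<Longrightarrow> 0 \<le> p k" and "\<And>k. k < n \<Longrightarrow> 0 \<le> q k"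
  shows "\<forall>\<omega> \<psi>. in_Omega L n \<omega> \<and> in_Psi L n \<psi> \<and> \<psi> \<noteq> Pi \<omega> \<longrightarrow>
           in_Psi L n (Pi \<omega>) \<and>
           rate_to_fibre L n p q \<omega> \<psi> = asep_rate L p q (Pi \<omega>) \<psi>"
proof (intro allI impI conjI)
  fix \<omega> \<psi> assume h: "in_Omega L n \<omega> \<and> in_Psi L n \<psi> \<and> \<psi> \<noteq> Pi \<omega>"
  then have om: "in_Omega L n \<omega>" by simp
  show "in_Psi L n (Pi \<omega>)" using Pi_Psi[OF om] .
  have "map (\<lambda>m. (fst m, Pi (snd m))) (moves L n p q \<omega>)
      = concat (map (asep_moves_at L p q (Pi \<omega>)) [0..<L])"
    unfolding moves_def map_concat map_map
    by (rule arg_cong[where f=concat], rule map_cong) (auto simp: moves_at_proj[OF om])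
  then show "rate_to_fibre L n p q \<omega> \<psi> = asep_rate L p q (Pi \<omega>) \<psi>"
    unfolding rate_to_fibre_def asep_rate_def comp_map by simp
qed
end
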